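(* Let $S$ be a finite set of points in $\mathbb{R}^d$ with Euclidean distance, $f\ge0$ an integer, $0<\theta<\pi/4$, $\mathcal{C}$ a cone collection as in the context, and $\Theta=\Theta(\theta,2f+1)$. Let $F$ be a set of edges of $\Theta$ such that $(S,F)$ has maximum degree at most $f$. Let $\{p,q\}$ be an edge of $K_S\setminus F$ that is not an edge of $\Theta$, and let $C\in\mathcal{C}$ be a cone with $q\in C+p$. Then there is a point $r\in S_{p,C}$ such that: $r\ne q$; the orthogonal projection of $r$ onto the ray $\ell_C+p$ is at least as close to $p$ as the orthogonal projection of $q$ onto $\ell_C+p$; $\{p,r\}$ is an edge of $\Theta\setminus F$; and $\{r,q\}$ is an edge of $K_S\setminus F$.
   Context: $K_S$ is the complete graph on $S$ with edge weights the Euclidean distances; $X\setminus F$ is $X$ with the edges of $F$ removed. $\mathcal{C}$ is a finite collection of cones with apex at the origin covering $\mathbb{R}^d$, each of angular diameter at most $\theta$, i.e. $\max\{\angle(0x,0y):x,y\in C\setminus\{0\}\}\le\theta$. For each $C\in\mathcal{C}$ fix a ray $\ell_C$ from the origin contained in $C$. For $p\in S$: $C+p=\{x+p:x\in C\}$, $\ell_C+p$ is the translate of $\ell_C$ emanating from $p$, and $S_{p,C}=(C+p)\cap(S\setminus\{p\})$. The graph $\Theta(\theta,k)$ has vertex set $S$, and for each $p\in S$ and $C\in\mathcal{C}$ it contains an edge from $p$ to each of $\min(k,|S_{p,C}|)$ points of $S_{p,C}$ whose orthogonal projections onto $\ell_C+p$ are closest to $p$ (ties broken arbitrarily). *)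

theory Defs
  imports "HOL-Analysis.Analysis"
begin

definition vec_angle :: "'a::euclidean_space \<Rightarrow> 'a \<Rightarrow> real" where
  "vec_angle x y = arccos ((x \<bullet> y) / (norm x * norm y))"

definition is_cone0 :: "'a::euclidean_space set \<Rightarrow> bool" where
  "is_cone0 C \<longleftrightarrow> 0 \<in> C \<and> (\<forall>x\<in>C. \<forall>t::real. t \<ge> 0 \<longrightarrow> t *\<^sub>R x \<in> C)"

text \<open>A finite collection of cones covering the space, each of angular diameter at most
  theta, together with a choice of ray (given by unit direction u C) inside each cone.\<close>
definition cone_collection :: "real \<Rightarrow> 'a::euclidean_space set set \<Rightarrow> ('a set \<Rightarrow> 'a) \<Rightarrow> bool" where
  "cone_collection \<theta> Cs u \<longleftrightarrow>
     finite Cs \<and> \<Union>Cs = UNIV \<and>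
     (\<forall>C\<in>Cs. is_cone0 C \<and>
        (\<forall>x\<in>C - {0}. \<forall>y\<in>C - {0}. vec_angle x y \<le> \<theta>) \<and>
        norm (u C) = 1 \<and> (\<forall>t::real. t \<ge> 0 \<longrightarrow> t *\<^sub>R u C \<in> C))"

definition cone_at :: "'a::euclidean_space set \<Rightarrow> 'a \<Rightarrow> 'a set" where
  "cone_at C p = (\<lambda>x. x + p) ` C"

definition S_pC :: "'a::euclidean_space set \<Rightarrow> 'a \<Rightarrow> 'a set \<Rightarrow> 'a set" where
  "S_pC S p C = cone_at C p \<inter> (S - {p})"

definition ray_proj :: "'a::euclidean_space \<Rightarrow> 'a \<Rightarrow> 'a \<Rightarrow> 'a" where
  "ray_proj p v x = p + max 0 ((x - p) \<bullet> v) *\<^sub>R v"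

text \<open>nbr p C is a valid choice of the (at most k) points of S_{p,C} whose projections onto
  the ray l_C + p are closest to p (ties broken arbitrarily).\<close>
definition theta_choice ::
  "'a::euclidean_space set \<Rightarrow> 'a set set \<Rightarrow> ('a set \<Rightarrow> 'a) \<Rightarrow> nat \<Rightarrow> ('a \<Rightarrow> 'a set \<Rightarrow> 'a set) \<Rightarrow> bool" where
  "theta_choice S Cs u k nbr \<longleftrightarrow>
     (\<forall>p\<in>S. \<forall>C\<in>Cs.
        nbr p C \<subseteq> S_pC S p C \<and>
        card (nbr p C) = min k (card (S_pC S p C)) \<and>
        (\<forall>x\<in>nbr p C. \<forall>y\<in>S_pC S p C - nbr p C.
            dist p (ray_proj p (u C) x) \<le> dist p (ray_proj p (u C) y)))"

definition theta_edges ::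
  "'a::euclidean_space set \<Rightarrow> 'a set set \<Rightarrow> ('a \<Rightarrow> 'a set \<Rightarrow> 'a set) \<Rightarrow> 'a set set" where
  "theta_edges S Cs nbr = {{p, q} | p q. p \<in> S \<and> (\<exists>C\<in>Cs. q \<in> nbr p C)}"

definition KS_edges :: "'a set \<Rightarrow> 'a set set" where
  "KS_edges S = {{p, q} | p q. p \<in> S \<and> q \<in> S \<and> p \<noteq> q}"

definition max_degree_le :: "'a set \<Rightarrow> 'a set set \<Rightarrow> nat \<Rightarrow> bool" where
  "max_degree_le S F f \<longleftrightarrow> (\<forall>v\<in>S. card {e\<in>F. v \<in> e} \<le> f)"

end

theory Submission
  imports Defs
begin

theorem lemma10:
  fixes S :: "'a::euclidean_space set"
    and f :: nat and \<theta> :: real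
    and Cs :: "'a set set" and u :: "'a set \<Rightarrow> 'a"
    and nbr :: "'a \<Rightarrow> 'a set \<Rightarrow> 'a set"
    and F :: "'a set set" and p q :: 'a and C :: "'a set"
  assumes "finite S"
    and "0 < \<theta>" and "\<theta> < pi / 4"
    and "cone_collection \<theta> Cs u"
    and "theta_choice S Cs u (2 * f + 1) nbr"
    and "F \<subseteq> theta_edges S Cs nbr"
    and "max_degree_le S F f"
    and "{p, q} \<in> KS_edges S - F"
    and "{p, q} \<notin> theta_edges S Cs nbr"
    and "C \<in> Cs" and "q \<in> cone_at C p"
  shows "\<exists>r \<in> S_pC S p C.
           r \<noteq> q \<and>
           dist p (ray_proj p (u C) r) \<le> dist p (ray_proj p (u C) q) \<and>
           {p, r} \<in> theta_edges S Cs nbr - F \<and>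
           {r, q} \<in> KS_edges S - F"
proof -
  have pq: "p \<in> S" "q \<in> S" "p \<noteq> q"
    using assms(8) unfolding KS_edges_def by (auto simp: doubleton_eq_iff)
  define N where "N = nbr p C"
  have tc: "N \<subseteq> S_pC S p C" "card N = min (2*f+1) (card (S_pC S p C))"
    "\<And>x y. x \<in> N \<Longrightarrow> y \<in> S_pC S p C - N \<Longrightarrow>
        dist p (ray_proj p (u C) x) \<le> dist p (ray_proj p (u C) y)"
    using assms(5) pq assms(10) unfolding theta_choice_def N_def by blast+
  have finSp: "finite (S_pC S p C)" using assms(1) unfolding S_pC_def by auto
  have qS: "q \<in> S_pC S p C" using pq assms(11) unfolding S_pC_def by auto
  have qN: "q \<notin> N" using assms(9) pq assms(10) unfolding theta_edges_def N_def by blast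
  have finN: "finite N" using tc(1) finSp finite_subset by blast
  have cardN: "card N = 2*f+1"
  proof (rule ccontr)
    assume "card N \<noteq> 2*f+1"
    then have "card N = card (S_pC S p C)" using tc(2) by linarith
    then have "N = S_pC S p C" using tc(1) finSp by (simp add: card_subset_eq)
    then show False using qS qN by simp
  qed
  have edgesS: "theta_edges S Cs nbr \<subseteq> Pow S"
  proof
    fix e assume "e \<in> theta_edges S Cs nbr"
    then obtain a b C' where e: "e = {a,b}" "a \<in> S" "C' \<in> Cs" "b \<in> nbr a C'"
      unfolding theta_edges_def by blast
    have "nbr a C' \<subseteq> S_pC S a C'" using assms(5) e unfolding theta_choice_def by blast
    then have "b \<in> S" using e unfolding S_pC_def by auto
    then show "e \<in> Pow S" using e by auto
  qed
  have finF: "finite F" using assms(6) edgesS assms(1)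
    by (meson finite_Pow_iff finite_subset)
  define B1 where "B1 = {r\<in>N. {p,r} \<in> F}"
  define B2 where "B2 = {r\<in>N. {r,q} \<in> F}"
  have "card B1 \<le> card {e\<in>F. p \<in> e}"
  proof (rule card_inj_on_le[where f="\<lambda>r. {p,r}"])
    show "inj_on (\<lambda>r. {p,r}) B1" by (auto simp: inj_on_def doubleton_eq_iff)
    show "(\<lambda>r. {p,r}) ` B1 \<subseteq> {e\<in>F. p \<in> e}" unfolding B1_def by auto
    show "finite {e\<in>F. p \<in> e}" using finF by auto
  qed
  also have "\<dots> \<le> f" using assms(7) pq unfolding max_degree_le_def by blast
  finally have c1: "card B1 \<le> f" .
  have "card B2 \<le> card {e\<in>F. q \<in> e}"
  proof (rule card_inj_on_le[where f="\<lambda>r. {r,q}"])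
    show "inj_on (\<lambda>r. {r,q}) B2" by (auto simp: inj_on_def doubleton_eq_iff)
    show "(\<lambda>r. {r,q}) ` B2 \<subseteq> {e\<in>F. q \<in> e}" unfolding B2_def by auto
    show "finite {e\<in>F. q \<in> e}" using finF by auto
  qed
  also have "\<dots> \<le> f" using assms(7) pq unfolding max_degree_le_def by blast
  finally have c2: "card B2 \<le> f" .
  have "card (B1 \<union> B2) \<le> 2*f" using c1 c2 card_Un_le[of B1 B2] by linarith
  then have "\<not> N \<subseteq> B1 \<union> B2"
  proof -
    assume h: "card (B1 \<union> B2) \<le> 2*f"
    have "finite (B1 \<union> B2)" using finN unfolding B1_def B2_def by auto
    then show ?thesis using h cardN card_mono[of "B1 \<union> B2" N] by auto
  qed
  then obtain r where r: "r \<in> N" "{p,r} \<notin> F" "{r,q} \<notin> F"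
    unfolding B1_def B2_def by blast
  have rS: "r \<in> S_pC S p C" using r tc(1) by blast
  have rq: "r \<noteq> q" using r qN by blast
  have d: "dist p (ray_proj p (u C) r) \<le> dist p (ray_proj p (u C) q)"
    using tc(3) r(1) qS qN by blast
  have th: "{p, r} \<in> theta_edges S Cs nbr"
    unfolding theta_edges_def using pq assms(10) r(1) N_def by blast
  have rSS: "r \<in> S" using rS unfolding S_pC_def by auto
  have ks: "{r, q} \<in> KS_edges S" unfolding KS_edges_def using rSS pq rq by blast
  show ?thesis using rS rq d th ks r by blast
qed

end
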